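(* Let $n_1,n_2\ge 1$ be integers, $n=n_1+n_2$, and consider a uniformly random arrangement of $n_1$ symbols $x$ and $n_2$ symbols $y$ (all $\binom{n}{n_1}$ arrangements equally likely). Let $R_1$ and $R_2$ be the numbers of runs of $x$'s and of $y$'s, respectively, $R_m=\min(R_1,R_2)$ and $R_M=\max(R_1,R_2)$. Then $$\mathrm{Cov}(R_m,R_M)=\frac{n_1n_2(n_1-1)(n_2-1)}{n(n-1)^2}.$$
   Context: A run is a maximal block of consecutive identical symbols in the arrangement. *)

theory Defs
  imports Complex_Main
begin

text \<open>An arrangement of n1 symbols x and n2 symbols y is a boolean list of length n1+n2
  with exactly n1 entries True (True = x, False = y).\<close>
definition arrangements :: "nat \<Rightarrow> nat \<Rightarrow> bool list set" where
  "arrangements n1 n2 = {xs. length xs = n1 + n2 \<and> length (filter id xs) = n1}"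

text \<open>Number of runs (maximal blocks of consecutive equal symbols) of symbol a:
  counted by their starting positions.\<close>
definition runs :: "bool \<Rightarrow> bool list \<Rightarrow> nat" where
  "runs a xs = card {i. i < length xs \<and> xs ! i = a \<and> (i = 0 \<or> xs ! (i - 1) \<noteq> a)}"

definition uexp :: "'a set \<Rightarrow> ('a \<Rightarrow> real) \<Rightarrow> real" where
  "uexp S f = (\<Sum>s\<in>S. f s) / real (card S)"

definition ucov :: "'a set \<Rightarrow> ('a \<Rightarrow> real) \<Rightarrow> ('a \<Rightarrow> real) \<Rightarrow> real" where
  "ucov S f g = uexp S (\<lambda>s. (f s - uexp S f) * (g s - uexp S g))"

end

theory Submission
  imports Defs
begin


definition tset :: "bool list \<Rightarrow> nat set" where
  "tset xs = {i. i < length xs \<and> xs!i}"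

definition ff :: "nat \<Rightarrow> nat \<Rightarrow> real" where
  "ff a k = (\<Prod>i<k. real a - real i)"

lemma ff_Suc: "ff a (Suc k) = ff a k * (real a - real k)"
  by (simp add: ff_def)

lemma ff_zero: "a < k \<Longrightarrow> ff a k = 0"
  unfolding ff_def by (rule prod_zero) auto

lemma ff_fact: "k \<le> a \<Longrightarrow> ff a k * fact (a - k) = fact a"
proof (induction k)
  case 0 then show ?case by (simp add: ff_def)
next
  case (Suc k)
  have "fact (a - k) = (real (a - k)) * (fact (a - Suc k) :: real)"
    using Suc.prems by (metis Suc_diff_Suc fact_Suc less_eq_Suc_le of_nat_Suc Suc_diff_le diff_Suc_Suc)
  then show ?case using Suc by (simp add: ff_Suc of_nat_diff)
qed

lemma ff_choose: "k \<le> a \<Longrightarrow> ff a k = fact k * real (a choose k)"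
proof -
  assume k: "k \<le> a"
  have "fact k * fact (a - k) * real (a choose k) = fact a"
    using binomial_fact_lemma[OF k] by (metis of_nat_fact of_nat_mult)
  moreover have "ff a k * fact (a - k) = fact a" using ff_fact[OF k] .
  ultimately show ?thesis by (metis (no_types, lifting) fact_nonzero mult.commute mult.left_commute mult_right_cancel)
qed

lemma card_sup:
  assumes "finite U" "A \<subseteq> U" "card A \<le> m"
  shows "card {T. T \<subseteq> U \<and> card T = m \<and> A \<subseteq> T} = card (U - A) choose (m - card A)"
proof -
  have fA: "finite A" using assms finite_subset by blast
  have "bij_betw (\<lambda>T. T - A) {T. T \<subseteq> U \<and> card T = m \<and> A \<subseteq> T} {B. B \<subseteq> U - A \<and> card B = m - card A}"
  proof (rule bij_betw_byWitness[where f'="\<lambda>B. B \<union> A"])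
    show "\<forall>a\<in>{T. T \<subseteq> U \<and> card T = m \<and> A \<subseteq> T}. a - A \<union> A = a" by auto
    show "\<forall>a'\<in>{B. B \<subseteq> U - A \<and> card B = m - card A}. a' \<union> A - A = a'" by auto
    show "(\<lambda>T. T - A) ` {T. T \<subseteq> U \<and> card T = m \<and> A \<subseteq> T} \<subseteq> {B. B \<subseteq> U - A \<and> card B = m - card A}"
      by (auto simp: card_Diff_subset fA)
    show "(\<lambda>B. B \<union> A) ` {B. B \<subseteq> U - A \<and> card B = m - card A} \<subseteq> {T. T \<subseteq> U \<and> card T = m \<and> A \<subseteq> T}"
    proof clarify
      fix B assume B: "B \<subseteq> U - A" "card B = m - card A"
      have "finite B" using B assms finite_subset by blast
      then have "card (B \<union> A) = card B + card A"
        using B fA by (subst card_Un_disjoint) auto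
      then show "B \<union> A \<subseteq> U \<and> card (B \<union> A) = m \<and> A \<subseteq> B \<union> A" using B assms by auto
    qed
  qed
  then have "card {T. T \<subseteq> U \<and> card T = m \<and> A \<subseteq> T} = card {B. B \<subseteq> U - A \<and> card B = m - card A}"
    by (rule bij_betw_same_card)
  also have "\<dots> = card (U - A) choose (m - card A)" using assms by (simp add: n_subsets)
  finally show ?thesis .
qed

lemma card_sup0:
  assumes "finite U" "card A > m"
  shows "card {T. T \<subseteq> U \<and> card T = m \<and> A \<subseteq> T} = 0"
proof -
  have "{T. T \<subseteq> U \<and> card T = m \<and> A \<subseteq> T} = {}"
  proof (rule ccontr)
    assume "\<not> ?thesis"
    then obtain T where T: "T \<subseteq> U" "card T = m" "A \<subseteq> T" by auto
    have "finite T" using T assms finite_subset by blast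
    then have "card A \<le> card T" using T card_mono by blast
    then show False using T assms by simp
  qed
  then show ?thesis by (simp only: card.empty)
qed

lemma arr_bij:
  "bij_betw tset {xs \<in> arrangements n1 n2. A \<subseteq> tset xs}
     {T. T \<subseteq> {..<n1+n2} \<and> card T = n1 \<and> A \<subseteq> T}"
proof (rule bij_betw_byWitness[where f'="\<lambda>T. map (\<lambda>i. i \<in> T) [0..<n1+n2]"])
  show "\<forall>a\<in>{xs \<in> arrangements n1 n2. A \<subseteq> tset xs}. map (\<lambda>i. i \<in> tset a) [0..<n1 + n2] = a"
    by (auto simp: arrangements_def tset_def intro: nth_equalityI)
  show "\<forall>a'\<in>{T. T \<subseteq> {..<n1 + n2} \<and> card T = n1 \<and> A \<subseteq> T}. tset (map (\<lambda>i. i \<in> a') [0..<n1 + n2]) = a'"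
    by (auto simp: tset_def)
  show "tset ` {xs \<in> arrangements n1 n2. A \<subseteq> tset xs} \<subseteq> {T. T \<subseteq> {..<n1 + n2} \<and> card T = n1 \<and> A \<subseteq> T}"
    by (auto simp: arrangements_def tset_def length_filter_conv_card)
  show "(\<lambda>T. map (\<lambda>i. i \<in> T) [0..<n1 + n2]) ` {T. T \<subseteq> {..<n1 + n2} \<and> card T = n1 \<and> A \<subseteq> T}
    \<subseteq> {xs \<in> arrangements n1 n2. A \<subseteq> tset xs}"
  proof (rule image_subsetI)
    fix T assume "T \<in> {T. T \<subseteq> {..<n1 + n2} \<and> card T = n1 \<and> A \<subseteq> T}"
    then have T: "T \<subseteq> {..<n1+n2}" "card T = n1" "A \<subseteq> T" by auto
    have "{i. i < n1 + n2 \<and> map (\<lambda>i. i \<in> T) [0..<n1 + n2] ! i} = T" using T by (auto cong: conj_cong)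
    moreover have "\<forall>x\<in>A. map (\<lambda>i. i \<in> T) [0..<n1 + n2] ! x"
    proof
      fix x assume "x \<in> A"
      then have "x \<in> T" "x < n1 + n2" using T by auto
      then show "map (\<lambda>i. i \<in> T) [0..<n1 + n2] ! x" by simp
    qed
    ultimately show "map (\<lambda>i. i \<in> T) [0..<n1 + n2] \<in> {xs \<in> arrangements n1 n2. A \<subseteq> tset xs}"
      using T by (auto simp: arrangements_def tset_def length_filter_conv_card)
  qed
qed

lemma count_M:
  assumes "A \<subseteq> {..<n1+n2}"
  shows "real (card {xs \<in> arrangements n1 n2. A \<subseteq> tset xs}) * ff (n1+n2) (card A)
       = real (card (arrangements n1 n2)) * ff n1 (card A)"
proof -
  have c1: "card {xs \<in> arrangements n1 n2. A \<subseteq> tset xs} = card {T. T \<subseteq> {..<n1+n2} \<and> card T = n1 \<and> A \<subseteq> T}"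
    using arr_bij by (rule bij_betw_same_card)
  have "card (arrangements n1 n2) = card {xs \<in> arrangements n1 n2. {} \<subseteq> tset xs}" by simp
  also have "\<dots> = card {T. T \<subseteq> {..<n1+n2} \<and> card T = n1 \<and> {} \<subseteq> T}"
    using arr_bij by (rule bij_betw_same_card)
  also have "\<dots> = (n1+n2) choose n1" using card_sup[of "{..<n1+n2}" "{}" n1] by simp
  finally have c0: "card (arrangements n1 n2) = (n1+n2) choose n1" .
  have fA: "finite A" using assms finite_subset by blast
  have kn: "card A \<le> n1 + n2" using card_mono[OF _ assms] by simp
  show ?thesis
  proof (cases "card A \<le> n1")
    case True
    have "card {T. T \<subseteq> {..<n1+n2} \<and> card T = n1 \<and> A \<subseteq> T} = (n1+n2 - card A) choose (n1 - card A)"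
      using card_sup[of "{..<n1+n2}" A n1] True assms fA by (simp add: card_Diff_subset)
    moreover have "((n1+n2) choose n1) * (n1 choose card A) = ((n1+n2) choose card A) * ((n1+n2 - card A) choose (n1 - card A))"
      using choose_mult[of "card A" n1 "n1+n2"] True by simp
    then have "real ((n1+n2) choose n1) * real (n1 choose card A) = real ((n1+n2) choose card A) * real ((n1+n2 - card A) choose (n1 - card A))"
      by (metis of_nat_mult)
    ultimately show ?thesis using c1 c0 True kn
      by (simp add: ff_choose)
  next
    case False
    then show ?thesis using c1 card_sup0[of "{..<n1+n2}" n1 A] by (simp add: ff_zero)
  qed
qed



definition pr :: "bool \<Rightarrow> bool list \<Rightarrow> nat" where
  "pr a xs = card {i. Suc i < length xs \<and> xs!i = a \<and> xs!(Suc i) = a}"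

lemma card_Suc_split:
  "card {i. i < Suc L \<and> P i} = card {i. i < L \<and> P i} + (if P L then 1 else 0)"
proof -
  have "{i. i < Suc L \<and> P i} = (if P L then insert L {i. i < L \<and> P i} else {i. i < L \<and> P i})"
    by (auto simp: less_Suc_eq)
  then show ?thesis by simp
qed

lemma runs_snoc:
  "runs a (xs @ [y]) = runs a xs + (if y = a \<and> (xs = [] \<or> last xs \<noteq> a) then 1 else 0)"
proof -
  let ?L = "length xs"
  have "runs a (xs @ [y]) = card {i. i < Suc ?L \<and> ((xs@[y])!i = a \<and> (i = 0 \<or> (xs@[y])!(i-1) \<noteq> a))}"
    by (simp add: runs_def)
  also have "\<dots> = card {i. i < ?L \<and> ((xs@[y])!i = a \<and> (i = 0 \<or> (xs@[y])!(i-1) \<noteq> a))}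
     + (if ((xs@[y])!?L = a \<and> (?L = 0 \<or> (xs@[y])!(?L-1) \<noteq> a)) then 1 else 0)"
    by (rule card_Suc_split)
  also have "{i. i < ?L \<and> ((xs@[y])!i = a \<and> (i = 0 \<or> (xs@[y])!(i-1) \<noteq> a))}
     = {i. i < ?L \<and> (xs!i = a \<and> (i = 0 \<or> xs!(i-1) \<noteq> a))}"
    by (auto simp: nth_append)
  also have "(if ((xs@[y])!?L = a \<and> (?L = 0 \<or> (xs@[y])!(?L-1) \<noteq> a)) then 1 else 0)
     = (if y = a \<and> (xs = [] \<or> last xs \<noteq> a) then 1 else (0::nat))"
    by (cases "xs = []") (auto simp: nth_append last_conv_nth)
  finally show ?thesis by (simp add: runs_def)
qed

lemma pr_snoc:
  "pr a (xs @ [y]) = pr a xs + (if xs \<noteq> [] \<and> last xs = a \<and> y = a then 1 else 0)"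
proof (cases "xs = []")
  case True then show ?thesis by (simp add: pr_def)
next
  case False
  then obtain L where L: "length xs = Suc L" by (cases xs) auto
  have "pr a (xs @ [y]) = card {i. i < Suc L \<and> ((xs@[y])!i = a \<and> (xs@[y])!(Suc i) = a)}"
    by (simp add: pr_def L)
  also have "\<dots> = card {i. i < L \<and> ((xs@[y])!i = a \<and> (xs@[y])!(Suc i) = a)}
     + (if ((xs@[y])!L = a \<and> (xs@[y])!(Suc L) = a) then 1 else 0)"
    by (rule card_Suc_split)
  also have "{i. i < L \<and> ((xs@[y])!i = a \<and> (xs@[y])!(Suc i) = a)}
     = {i. Suc i < length xs \<and> (xs!i = a \<and> xs!(Suc i) = a)}"
    using L by (auto simp: nth_append)
  also have "(if ((xs@[y])!L = a \<and> (xs@[y])!(Suc L) = a) then 1 else 0)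
     = (if xs \<noteq> [] \<and> last xs = a \<and> y = a then 1 else (0::nat))"
    using L False by (auto simp: nth_append last_conv_nth)
  finally show ?thesis by (simp add: pr_def)
qed

lemma runs_pr: "runs a xs + pr a xs = length (filter (\<lambda>x. x = a) xs)"
proof (induction xs rule: rev_induct)
  case Nil then show ?case by (simp add: runs_def pr_def)
next
  case (snoc y xs)
  then show ?case by (auto simp: runs_snoc pr_snoc)
qed

lemma prF: "xs \<noteq> [] \<Longrightarrow> int (pr False xs) + 2 * int (length (filter id xs))
   = int (length xs) - 1 + of_bool (hd xs) + of_bool (last xs) + int (pr True xs)"
proof (induction xs rule: rev_induct)
  case Nil then show ?case by simp
next
  case (snoc y xs)
  show ?case
  proof (cases "xs = []")
    case True then show ?thesis by (simp add: pr_def)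
  next
    case False
    then show ?thesis using snoc by (cases y; cases "last xs") (auto simp: pr_snoc)
  qed
qed



definition M :: "nat set \<Rightarrow> bool list \<Rightarrow> real" where
  "M A xs = of_bool (A \<subseteq> tset xs)"

lemma M_mult: "M A xs * M B xs = M (A \<union> B) xs"
  by (simp add: M_def)

lemma card_arr: "card (arrangements n1 n2) = (n1+n2) choose n1"
proof -
  have "card (arrangements n1 n2) = card {xs \<in> arrangements n1 n2. {} \<subseteq> tset xs}" by simp
  also have "\<dots> = card {T. T \<subseteq> {..<n1+n2} \<and> card T = n1 \<and> {} \<subseteq> T}"
    using arr_bij by (rule bij_betw_same_card)
  also have "\<dots> = (n1+n2) choose n1" using card_sup[of "{..<n1+n2}" "{}" n1] by simp
  finally show ?thesis .
qed

lemma card_arr_pos: "card (arrangements n1 n2) > 0"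
  by (simp add: card_arr)

lemma finite_arr: "finite (arrangements n1 n2)"
  using card_arr_pos card_gt_0_iff by blast

lemma EM:
  assumes "A \<subseteq> {..<n1+n2}"
  shows "(\<Sum>xs\<in>arrangements n1 n2. M A xs)
     = real (card (arrangements n1 n2)) * ff n1 (card A) / ff (n1+n2) (card A)"
proof -
  have fA: "finite A" using assms finite_subset by blast
  have kn: "card A \<le> n1 + n2" using card_mono[OF _ assms] by simp
  have nz: "ff (n1+n2) (card A) \<noteq> 0"
    unfolding ff_def using kn by (auto simp: prod_zero_iff)
  have "(\<Sum>xs\<in>arrangements n1 n2. M A xs) = real (card (arrangements n1 n2 \<inter> {xs. A \<subseteq> tset xs}))"
    unfolding M_def by (rule sum_of_bool_eq[OF finite_arr finite_arr])
  also have "arrangements n1 n2 \<inter> {xs. A \<subseteq> tset xs} = {xs \<in> arrangements n1 n2. A \<subseteq> tset xs}" by blast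
  finally have "(\<Sum>xs\<in>arrangements n1 n2. M A xs) = real (card {xs \<in> arrangements n1 n2. A \<subseteq> tset xs})" .
  then show ?thesis using count_M[OF assms] nz by (simp add: field_simps)
qed

lemma ucov_alt:
  assumes "finite S" "S \<noteq> {}"
  shows "ucov S f g = (\<Sum>s\<in>S. f s * g s) / card S - ((\<Sum>s\<in>S. f s) / card S) * ((\<Sum>s\<in>S. g s) / card S)"
proof -
  have c: "real (card S) > 0" using assms by (simp add: card_gt_0_iff)
  define Ef where "Ef = (\<Sum>s\<in>S. f s) / card S"
  define Eg where "Eg = (\<Sum>s\<in>S. g s) / card S"
  have "(\<Sum>s\<in>S. (f s - Ef) * (g s - Eg)) = (\<Sum>s\<in>S. f s * g s) - Eg * (\<Sum>s\<in>S. f s) - Ef * (\<Sum>s\<in>S. g s) + card S * Ef * Eg"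
  proof -
    have "(\<Sum>s\<in>S. (f s - Ef) * (g s - Eg)) = (\<Sum>s\<in>S. f s * g s - Eg * f s - Ef * g s + Ef * Eg)"
      by (rule sum.cong) (simp_all add: algebra_simps)
    also have "\<dots> = (\<Sum>s\<in>S. f s * g s) - Eg * (\<Sum>s\<in>S. f s) - Ef * (\<Sum>s\<in>S. g s) + card S * Ef * Eg"
      by (simp only: sum.distrib sum_subtractf sum_distrib_left[symmetric] sum_constant) simp
    finally show ?thesis .
  qed
  moreover have "(\<Sum>s\<in>S. f s) = card S * Ef" "(\<Sum>s\<in>S. g s) = card S * Eg"
    using c by (simp_all add: Ef_def Eg_def)
  ultimately have "(\<Sum>s\<in>S. (f s - Ef) * (g s - Eg)) = (\<Sum>s\<in>S. f s * g s) - card S * Ef * Eg"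
    by (simp add: algebra_simps)
  then have "ucov S f g = ((\<Sum>s\<in>S. f s * g s) - card S * Ef * Eg) / card S"
    unfolding ucov_def uexp_def Ef_def[symmetric] Eg_def[symmetric] by simp
  also have "\<dots> = (\<Sum>s\<in>S. f s * g s) / card S - Ef * Eg"
    using c by (simp add: diff_divide_distrib)
  finally show ?thesis by (simp add: Ef_def Eg_def)
qed



definition w :: "bool list \<Rightarrow> real" where
  "w xs = (\<Sum>i<length xs - 1. M {i, Suc i} xs)"

lemma w_pr: "w xs = real (pr True xs)"
proof -
  have "w xs = real (card ({..<length xs - 1} \<inter> {i. {i, Suc i} \<subseteq> tset xs}))"
    unfolding w_def M_def by (rule sum_of_bool_eq) simp_all
  also have "{..<length xs - 1} \<inter> {i. {i, Suc i} \<subseteq> tset xs} = {i. Suc i < length xs \<and> xs!i = True \<and> xs!(Suc i) = True}"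
    by (auto simp: tset_def)
  finally show ?thesis by (simp add: pr_def)
qed

lemma MZero: "xs \<noteq> [] \<Longrightarrow> M {0} xs = of_bool (hd xs)"
  by (simp add: M_def tset_def hd_conv_nth)

lemma MLast: "xs \<noteq> [] \<Longrightarrow> M {length xs - 1} xs = of_bool (last xs)"
  by (simp add: M_def tset_def last_conv_nth)

lemma runsT:
  assumes "xs \<in> arrangements n1 n2"
  shows "real (runs True xs) = real n1 - w xs"
proof -
  have "runs True xs + pr True xs = n1"
    using runs_pr[of True xs] assms by (simp add: arrangements_def id_def)
  then show ?thesis by (simp add: w_pr flip: of_nat_add)
qed

lemma runsF:
  assumes "xs \<in> arrangements n1 n2" "n1 \<ge> 1"
  shows "real (runs False xs) = real n1 + 1 - M {0} xs - M {n1+n2-1} xs - w xs"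
proof -
  have len: "length xs = n1 + n2" and cnt: "length (filter id xs) = n1"
    using assms by (auto simp: arrangements_def)
  have ne: "xs \<noteq> []" using len assms by auto
  have "length (filter id xs) + length (filter (\<lambda>x. \<not> id x) xs) = length xs"
    by (rule sum_length_filter_compl)
  then have cF: "length (filter (\<lambda>x. x = False) xs) = n2" using len cnt by simp
  have r: "runs False xs + pr False xs = n2"
    using runs_pr[of False xs] cF by simp
  have p: "int (pr False xs) + 2 * int n1 = int (n1+n2) - 1 + of_bool (hd xs) + of_bool (last xs) + int (pr True xs)"
    using prF[OF ne] len cnt by simp
  have p': "real (pr False xs) + 2 * real n1 = real (n1+n2) - 1 + of_bool (hd xs) + of_bool (last xs) + real (pr True xs)"
    using arg_cong[OF p, of real_of_int] by simp
  have r': "real (runs False xs) + real (pr False xs) = real n2"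
    using arg_cong[OF r, of real] by simp
  show ?thesis using p' r' MZero[OF ne] MLast[OF ne] len by (simp add: w_pr)
qed



context
  fixes n1 n2 :: nat
  assumes n1: "n1 \<ge> 1" and n2: "n2 \<ge> 1"
begin

abbreviation "S \<equiv> arrangements n1 n2"
abbreviation "NN \<equiv> real (card (arrangements n1 n2))"
definition "g k = NN * ff n1 k / ff (n1+n2) k"
abbreviation "m \<equiv> n1 + n2 - 1"
definition "wn xs = (\<Sum>i<m. M {i, Suc i} xs)"

lemma EMg: "A \<subseteq> {..<n1+n2} \<Longrightarrow> card A = k \<Longrightarrow> (\<Sum>xs\<in>S. M A xs) = g k"
  using EM unfolding g_def by blast

lemma w_wn: "xs \<in> S \<Longrightarrow> w xs = wn xs"
  by (simp add: w_def wn_def arrangements_def)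

lemma mpos: "m \<ge> 1" using n1 n2 by simp

lemma S_w: "(\<Sum>xs\<in>S. wn xs) = real m * g 2"
proof -
  have "(\<Sum>xs\<in>S. wn xs) = (\<Sum>i<m. \<Sum>xs\<in>S. M {i, Suc i} xs)"
    unfolding wn_def by (rule sum.swap)
  also have "\<dots> = (\<Sum>i<m. g 2)"
  proof (rule sum.cong[OF refl])
    fix i assume "i \<in> {..<m}"
    then show "(\<Sum>xs\<in>S. M {i, Suc i} xs) = g 2" by (intro EMg) (auto simp: numeral_2_eq_2)
  qed
  finally show ?thesis by simp
qed

lemma S_a: "(\<Sum>xs\<in>S. M {0} xs) = g 1"
  using n1 by (intro EMg) auto

lemma S_b: "(\<Sum>xs\<in>S. M {m} xs) = g 1"
  using n1 by (intro EMg) auto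

lemma S_ab: "(\<Sum>xs\<in>S. M {0} xs * M {m} xs) = g 2"
proof -
  have "m \<noteq> 0" "m < n1 + n2" using n1 n2 by auto
  then show ?thesis unfolding M_mult by (intro EMg) (auto simp: numeral_2_eq_2)
qed

lemma S_wa: "(\<Sum>xs\<in>S. wn xs * M {0} xs) = g 2 + (real m - 1) * g 3"
proof -
  obtain k where k: "m = Suc k" using mpos by (cases m) auto
  have "(\<Sum>xs\<in>S. wn xs * M {0} xs) = (\<Sum>i<m. \<Sum>xs\<in>S. M ({i, Suc i} \<union> {0}) xs)"
    unfolding wn_def sum_distrib_right M_mult by (rule sum.swap)
  also have "\<dots> = (\<Sum>i<Suc k. if i = 0 then g 2 else g 3)"
    unfolding k
  proof (rule sum.cong[OF refl])
    fix i assume i: "i \<in> {..<Suc k}"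
    then have sub: "{i, Suc i} \<union> {0} \<subseteq> {..<n1+n2}" using k by auto
    show "(\<Sum>xs\<in>S. M ({i, Suc i} \<union> {0}) xs) = (if i = 0 then g 2 else g 3)"
    proof (cases "i = 0")
      case True then show ?thesis using sub by (simp add: EMg numeral_2_eq_2)
    next
      case False
      have c3: "card ({i, Suc i} \<union> {0}) = 3" using False by (simp add: numeral_3_eq_3)
      show ?thesis using False EMg[OF sub c3] by simp
    qed
  qed
  also have "\<dots> = g 2 + (\<Sum>i<k. g 3)"
    by (simp only: sum.lessThan_Suc_shift) simp
  finally show ?thesis using k by simp
qed

lemma S_wb: "(\<Sum>xs\<in>S. wn xs * M {m} xs) = g 2 + (real m - 1) * g 3"
proof -
  obtain k where k: "m = Suc k" using mpos by (cases m) auto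
  have "(\<Sum>xs\<in>S. wn xs * M {m} xs) = (\<Sum>i<m. \<Sum>xs\<in>S. M ({i, Suc i} \<union> {m}) xs)"
    unfolding wn_def sum_distrib_right M_mult by (rule sum.swap)
  also have "\<dots> = (\<Sum>i<Suc k. if i = k then g 2 else g 3)"
  proof (rule sum.cong)
    show "{..<m} = {..<Suc k}" using k by simp
    fix i assume i: "i \<in> {..<Suc k}"
    then have sub: "{i, Suc i} \<union> {m} \<subseteq> {..<n1+n2}" using k by auto
    show "(\<Sum>xs\<in>S. M ({i, Suc i} \<union> {m}) xs) = (if i = k then g 2 else g 3)"
    proof (cases "i = k")
      case True
      then have c2: "card ({i, Suc i} \<union> {m}) = 2" using k by (simp add: numeral_2_eq_2 card_insert_if)
      show ?thesis using True EMg[OF sub c2] by simp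
    next
      case False
      then have "i < k" using i by simp
      then have c3: "card ({i, Suc i} \<union> {m}) = 3" using k by (simp add: numeral_3_eq_3)
      show ?thesis using False EMg[OF sub c3] by simp
    qed
  qed
  also have "\<dots> = (\<Sum>i<k. g 3) + g 2"
    by (simp only: sum.lessThan_Suc) simp
  finally show ?thesis using k by simp
qed


definition "G i j = (if i = j then g 2 else if j = Suc i \<or> i = Suc j then g 3 else g 4)"

lemma G_alt: "G i j = g 4 + of_bool (i = j) * (g 2 - g 4) + (of_bool (j = Suc i) + of_bool (i = Suc j)) * (g 3 - g 4)"
  unfolding G_def by auto

lemma S_pair:
  assumes "i < m" "j < m"
  shows "(\<Sum>xs\<in>S. M ({i, Suc i} \<union> {j, Suc j}) xs) = G i j"
proof -
  have sub: "{i, Suc i} \<union> {j, Suc j} \<subseteq> {..<n1+n2}" using assms by auto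
  consider "i = j" | "j = Suc i" | "i = Suc j" | "i \<noteq> j" "j \<noteq> Suc i" "i \<noteq> Suc j" by blast
  then show ?thesis
  proof cases
    case 1
    then have c: "card ({i, Suc i} \<union> {j, Suc j}) = 2" by (simp add: numeral_2_eq_2)
    show ?thesis using EMg[OF sub c] 1 by (simp add: G_def)
  next
    case 2
    then have c: "card ({i, Suc i} \<union> {j, Suc j}) = 3" by (simp add: numeral_3_eq_3 card_insert_if)
    show ?thesis using EMg[OF sub c] 2 by (simp add: G_def)
  next
    case 3
    then have c: "card ({i, Suc i} \<union> {j, Suc j}) = 3" by (simp add: numeral_3_eq_3 card_insert_if)
    show ?thesis using EMg[OF sub c] 3 by (simp add: G_def)
  next
    case 4
    then have c: "card ({i, Suc i} \<union> {j, Suc j}) = 4" by (simp add: eval_nat_numeral)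
    show ?thesis using EMg[OF sub c] 4 by (simp add: G_def)
  qed
qed

lemma S_ww: "(\<Sum>xs\<in>S. wn xs * wn xs) = real m * g 2 + 2 * (real m - 1) * g 3 + (real m * real m - real m - 2 * (real m - 1)) * g 4"
proof -
  have "(\<Sum>xs\<in>S. wn xs * wn xs) = (\<Sum>xs\<in>S. \<Sum>i<m. \<Sum>j<m. M ({i, Suc i} \<union> {j, Suc j}) xs)"
    unfolding wn_def sum_product M_mult ..
  also have "\<dots> = (\<Sum>i<m. \<Sum>xs\<in>S. \<Sum>j<m. M ({i, Suc i} \<union> {j, Suc j}) xs)"
    by (rule sum.swap)
  also have "\<dots> = (\<Sum>i<m. \<Sum>j<m. \<Sum>xs\<in>S. M ({i, Suc i} \<union> {j, Suc j}) xs)"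
    by (rule sum.cong[OF refl], rule sum.swap)
  also have "\<dots> = (\<Sum>i<m. \<Sum>j<m. G i j)"
    by (intro sum.cong refl S_pair) auto
  also have "\<dots> = (\<Sum>i<m. real m * g 4 + (g 2 - g 4) + (of_bool (Suc i < m) + of_bool (0 < i)) * (g 3 - g 4))"
  proof (rule sum.cong[OF refl])
    fix i assume i: "i \<in> {..<m}"
    have e1: "(\<Sum>j<m. of_bool (i = j) :: real) = 1"
    proof -
      have "{..<m} \<inter> {j. i = j} = {i}" using i by auto
      then show ?thesis by simp
    qed
    have e2: "(\<Sum>j<m. of_bool (j = Suc i) :: real) = of_bool (Suc i < m)"
    proof -
      have "{..<m} \<inter> {j. j = Suc i} = (if Suc i < m then {Suc i} else {})" by auto
      then show ?thesis by simp
    qed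
    have e3: "(\<Sum>j<m. of_bool (i = Suc j) :: real) = of_bool (0 < i)"
    proof -
      have "{..<m} \<inter> {j. i = Suc j} = (if 0 < i then {i - 1} else {})" using i by auto
      then show ?thesis by simp
    qed
    have h: "(\<Sum>j<m. G i j) = (\<Sum>j<m. g 4) + (\<Sum>j<m. of_bool (i = j)) * (g 2 - g 4)
       + ((\<Sum>j<m. of_bool (j = Suc i)) + (\<Sum>j<m. of_bool (i = Suc j))) * (g 3 - g 4)"
      by (simp only: G_alt sum.distrib sum_distrib_right[symmetric])
    show "(\<Sum>j<m. G i j) = real m * g 4 + (g 2 - g 4) + (of_bool (Suc i < m) + of_bool (0 < i)) * (g 3 - g 4)"
      by (simp only: h e1 e2 e3) simp
  qed
  also have "\<dots> = real m * real m * g 4 + real m * (g 2 - g 4) + (2 * (real m - 1)) * (g 3 - g 4)"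
  proof -
    have f1: "(\<Sum>i<m. of_bool (Suc i < m) :: real) = real m - 1"
    proof -
      have "{..<m} \<inter> {i. Suc i < m} = {..<m - 1}" by auto
      then show ?thesis using mpos by (simp add: of_nat_diff)
    qed
    have f2: "(\<Sum>i<m. of_bool (0 < i) :: real) = real m - 1"
    proof -
      have "{..<m} \<inter> {i. 0 < i} = {0<..<m}" by auto
      then show ?thesis using mpos by (simp add: of_nat_diff)
    qed
    have h: "(\<Sum>i<m. real m * g 4 + (g 2 - g 4) + (of_bool (Suc i < m) + of_bool (0 < i)) * (g 3 - g 4))
      = real m * (real m * g 4 + (g 2 - g 4)) + ((\<Sum>i<m. of_bool (Suc i < m)) + (\<Sum>i<m. of_bool (0 < i))) * (g 3 - g 4)"
      by (simp only: sum.distrib sum_distrib_right[symmetric] sum_constant) (simp add: algebra_simps)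
    show ?thesis by (simp only: h f1 f2) (simp add: algebra_simps)
  qed
  finally show ?thesis by (simp add: algebra_simps)
qed

end


context
  fixes n1 n2 :: nat
  assumes n1: "n1 \<ge> 1" and n2: "n2 \<ge> 1"
begin

abbreviation "SS \<equiv> arrangements n1 n2"
abbreviation "NNN \<equiv> real (card (arrangements n1 n2))"
abbreviation "mm \<equiv> n1 + n2 - 1"
abbreviation "gg \<equiv> g n1 n2"
abbreviation "ww \<equiv> wn n1 n2"

lemma pw:
  assumes xs: "xs \<in> SS"
  shows "real (min (runs True xs) (runs False xs)) = real n1 - ww xs - M {0} xs * M {mm} xs"
    and "real (max (runs True xs) (runs False xs)) = real n1 + 1 - M {0} xs - M {mm} xs - ww xs + M {0} xs * M {mm} xs"
    and "real (min (runs True xs) (runs False xs)) * real (max (runs True xs) (runs False xs))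
       = real n1 * (real n1 + 1) - real n1 * M {0} xs - real n1 * M {mm} xs - (2 * real n1 + 1) * ww xs
         + ww xs * M {0} xs + ww xs * M {mm} xs + ww xs * ww xs"
proof -
  have r1: "real (runs True xs) = real n1 - ww xs" using runsT[OF xs] w_wn[OF n1 n2 xs] by simp
  have r2: "real (runs False xs) = real n1 + 1 - M {0} xs - M {mm} xs - ww xs"
    using runsF[OF xs n1] w_wn[OF n1 n2 xs] by simp
  have mm: "real (min (runs True xs) (runs False xs)) * real (max (runs True xs) (runs False xs))
      = real (runs True xs) * real (runs False xs)"
    by (cases "runs True xs \<le> runs False xs") (auto simp: min_def max_def)
  obtain p q where pq: "M {0} xs = of_bool p" "M {mm} xs = of_bool q" unfolding M_def by blast
  have mn: "real (min (runs True xs) (runs False xs)) = min (real (runs True xs)) (real (runs False xs))"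
    by simp
  have mx: "real (max (runs True xs) (runs False xs)) = max (real (runs True xs)) (real (runs False xs))"
    by simp
  show "real (min (runs True xs) (runs False xs)) = real n1 - ww xs - M {0} xs * M {mm} xs"
    unfolding mn r1 r2 pq by (cases p; cases q) auto
  show "real (max (runs True xs) (runs False xs)) = real n1 + 1 - M {0} xs - M {mm} xs - ww xs + M {0} xs * M {mm} xs"
    unfolding mx r1 r2 pq by (cases p; cases q) auto
  show "real (min (runs True xs) (runs False xs)) * real (max (runs True xs) (runs False xs))
       = real n1 * (real n1 + 1) - real n1 * M {0} xs - real n1 * M {mm} xs - (2 * real n1 + 1) * ww xs
         + ww xs * M {0} xs + ww xs * M {mm} xs + ww xs * ww xs"
    unfolding mm r1 r2 by (simp add: algebra_simps)
qed


lemma Smin: "(\<Sum>xs\<in>SS. real (min (runs True xs) (runs False xs))) = NNN * real n1 - real mm * gg 2 - gg 2"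
proof -
  have "(\<Sum>xs\<in>SS. real (min (runs True xs) (runs False xs))) = (\<Sum>xs\<in>SS. real n1 - ww xs - M {0} xs * M {mm} xs)"
    by (rule sum.cong[OF refl]) (rule pw(1))
  also have "\<dots> = NNN * real n1 - (\<Sum>xs\<in>SS. ww xs) - (\<Sum>xs\<in>SS. M {0} xs * M {mm} xs)"
    by (simp only: sum_subtractf sum_constant)
  finally show ?thesis using S_w[OF n1 n2] S_ab[OF n1 n2] by simp
qed

lemma Smax: "(\<Sum>xs\<in>SS. real (max (runs True xs) (runs False xs))) = NNN * (real n1 + 1) - 2 * gg 1 - real mm * gg 2 + gg 2"
proof -
  have "(\<Sum>xs\<in>SS. real (max (runs True xs) (runs False xs))) = (\<Sum>xs\<in>SS. real n1 + 1 - M {0} xs - M {mm} xs - ww xs + M {0} xs * M {mm} xs)"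
    by (rule sum.cong[OF refl]) (rule pw(2))
  also have "\<dots> = NNN * (real n1 + 1) - (\<Sum>xs\<in>SS. M {0} xs) - (\<Sum>xs\<in>SS. M {mm} xs) - (\<Sum>xs\<in>SS. ww xs) + (\<Sum>xs\<in>SS. M {0} xs * M {mm} xs)"
    by (simp only: sum_subtractf sum.distrib sum_constant) (simp add: algebra_simps)
  finally show ?thesis using S_w[OF n1 n2] S_ab[OF n1 n2] S_a[OF n1 n2] S_b[OF n1 n2] by simp
qed

lemma Sprod: "(\<Sum>xs\<in>SS. real (min (runs True xs) (runs False xs)) * real (max (runs True xs) (runs False xs)))
  = NNN * (real n1 * (real n1 + 1)) - real n1 * gg 1 - real n1 * gg 1 - (2 * real n1 + 1) * (real mm * gg 2)
    + 2 * (gg 2 + (real mm - 1) * gg 3)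
    + (real mm * gg 2 + 2 * (real mm - 1) * gg 3 + (real mm * real mm - real mm - 2 * (real mm - 1)) * gg 4)"
proof -
  have "(\<Sum>xs\<in>SS. real (min (runs True xs) (runs False xs)) * real (max (runs True xs) (runs False xs)))
     = (\<Sum>xs\<in>SS. real n1 * (real n1 + 1) - real n1 * M {0} xs - real n1 * M {mm} xs - (2 * real n1 + 1) * ww xs
         + ww xs * M {0} xs + ww xs * M {mm} xs + ww xs * ww xs)"
    by (rule sum.cong[OF refl]) (rule pw(3))
  also have "\<dots> = NNN * (real n1 * (real n1 + 1)) - real n1 * (\<Sum>xs\<in>SS. M {0} xs) - real n1 * (\<Sum>xs\<in>SS. M {mm} xs)
      - (2 * real n1 + 1) * (\<Sum>xs\<in>SS. ww xs) + (\<Sum>xs\<in>SS. ww xs * M {0} xs) + (\<Sum>xs\<in>SS. ww xs * M {mm} xs)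
      + (\<Sum>xs\<in>SS. ww xs * ww xs)"
    by (simp only: sum_subtractf sum.distrib sum_constant sum_distrib_left[symmetric])
  finally show ?thesis using S_w[OF n1 n2] S_a[OF n1 n2] S_b[OF n1 n2] S_wa[OF n1 n2] S_wb[OF n1 n2] S_ww[OF n1 n2]
    by simp
qed


lemma Npos: "NNN > 0" using card_arr_pos by simp

lemma ff1: "ff a 1 = real a" by (simp add: ff_def)
lemma ff2: "ff a 2 = real a * (real a - 1)" by (simp add: ff_def numeral_2_eq_2)
lemma ff3: "ff a 3 = real a * (real a - 1) * (real a - 2)" by (simp add: ff_def numeral_3_eq_3)
lemma ff4: "ff a 4 = real a * (real a - 1) * (real a - 2) * (real a - 3)"
  by (simp add: ff_def eval_nat_numeral)

lemma rt: "real mm = real (n1 + n2) - 1" using n1 by (simp add: of_nat_diff)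

lemma hg1: "gg 1 = NNN * real n1 / real (n1+n2)"
  by (simp only: g_def[OF n1 n2] ff1)

lemma hg2: "gg 2 = NNN * (real n1 * (real n1 - 1)) / (real (n1+n2) * real mm)"
  by (simp only: g_def[OF n1 n2] ff2 rt)

lemma hg3: "(real mm - 1) * gg 3 = NNN * (real n1 * (real n1 - 1) * (real n1 - 2)) / (real (n1+n2) * real mm)"
proof (cases "n1 + n2 = 2")
  case True
  then have "n1 = 1" using n1 n2 by simp
  then show ?thesis using True by simp
next
  case False
  then have ge: "real mm - 1 \<noteq> 0" using n1 n2 by linarith
  have f: "ff (n1+n2) 3 = real (n1+n2) * real mm * (real mm - 1)" unfolding ff3 rt by simp
  have cancel: "\<And>c A B. c \<noteq> 0 \<Longrightarrow> c * (A / (B * c)) = (A::real) / B" by simp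
  show ?thesis unfolding g_def[OF n1 n2] f ff3[of n1] by (rule cancel[OF ge])
qed

lemma hg4: "(real mm * real mm - real mm - 2 * (real mm - 1)) * gg 4
   = NNN * (real n1 * (real n1 - 1) * (real n1 - 2) * (real n1 - 3)) / (real (n1+n2) * real mm)"
proof (cases "n1 + n2 \<le> 3")
  case True
  then have "n1 = 1 \<or> n1 = 2" "n1 + n2 = 2 \<or> n1 + n2 = 3" using n1 n2 by auto
  then show ?thesis by auto
next
  case False
  then have ge: "real mm - 1 \<noteq> 0" "real mm - 2 \<noteq> 0" using n1 n2 by linarith+
  have c: "real mm * real mm - real mm - 2 * (real mm - 1) = (real mm - 1) * (real mm - 2)"
    by (simp add: algebra_simps)
  have f: "ff (n1+n2) 4 = real (n1+n2) * real mm * (real mm - 1) * (real mm - 2)" unfolding ff4 rt by (simp add: algebra_simps)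
  have cancel: "\<And>c d A B. c \<noteq> 0 \<Longrightarrow> d \<noteq> 0 \<Longrightarrow> (c * d) * (A / (B * c * d)) = (A::real) / B" by simp
  show ?thesis unfolding c g_def[OF n1 n2] f ff4[of n1] by (rule cancel[OF ge])
qed

lemma alg:
  fixes x s t N g1 g2 h3 h4 :: real
  assumes N: "N \<noteq> 0" and s0: "s \<noteq> 0" and t0: "t \<noteq> 0" and st: "s = t + 1"
  and g1: "g1 = N*x/s" and g2: "g2 = N*(x*(x-1))/(s*t)"
  and h3: "h3 = N*(x*(x-1)*(x-2))/(s*t)"
  and h4: "h4 = N*(x*(x-1)*(x-2)*(x-3))/(s*t)"
  shows "(N*(x*(x+1)) - x*g1 - x*g1 - (2*x+1)*(t*g2) + 2*g2 + 2*h3 + t*g2 + 2*h3 + h4) / N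
     - ((N*x - t*g2 - g2) / N) * ((N*(x+1) - 2*g1 - t*g2 + g2) / N)
     = x*(s-x)*(x-1)*(s-x-1)/(s*t^2)"
  unfolding g1 g2 h3 h4 using N s0 t0
  apply (simp add: field_simps)
  apply (simp add: st algebra_simps power2_eq_square)
  done

lemma main:
  "ucov SS (\<lambda>xs. real (min (runs True xs) (runs False xs))) (\<lambda>xs. real (max (runs True xs) (runs False xs)))
   = real (n1 * n2 * (n1 - 1) * (n2 - 1)) / (real (n1 + n2) * (real (n1 + n2) - 1)^2)"
proof -
  have ne: "SS \<noteq> {}" using card_arr_pos[of n1 n2] by auto
  have nz: "real mm \<noteq> 0" "real (n1+n2) \<noteq> 0" using n1 n2 by auto
  have r: "real (n1 * n2 * (n1 - 1) * (n2 - 1)) = real n1 * (real (n1+n2) - real n1) * (real n1 - 1) * (real (n1+n2) - real n1 - 1)"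
    using n1 n2 by (simp add: of_nat_diff)
  have Sprod': "(\<Sum>xs\<in>SS. real (min (runs True xs) (runs False xs)) * real (max (runs True xs) (runs False xs)))
    = NNN * (real n1 * (real n1 + 1)) - real n1 * gg 1 - real n1 * gg 1 - (2 * real n1 + 1) * (real mm * gg 2)
    + 2 * gg 2 + 2 * ((real mm - 1) * gg 3) + real mm * gg 2 + 2 * ((real mm - 1) * gg 3)
    + (real mm * real mm - real mm - 2 * (real mm - 1)) * gg 4"
    using Sprod by (simp add: algebra_simps)
  have "ucov SS (\<lambda>xs. real (min (runs True xs) (runs False xs))) (\<lambda>xs. real (max (runs True xs) (runs False xs)))
   = (NNN * (real n1 * (real n1 + 1)) - real n1 * gg 1 - real n1 * gg 1 - (2 * real n1 + 1) * (real mm * gg 2)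
    + 2 * gg 2 + 2 * ((real mm - 1) * gg 3) + real mm * gg 2 + 2 * ((real mm - 1) * gg 3)
    + (real mm * real mm - real mm - 2 * (real mm - 1)) * gg 4) / NNN
     - ((NNN * real n1 - real mm * gg 2 - gg 2) / NNN) * ((NNN * (real n1 + 1) - 2 * gg 1 - real mm * gg 2 + gg 2) / NNN)"
    unfolding ucov_alt[OF finite_arr ne] Smin Smax Sprod' ..
  also have "\<dots> = real n1 * (real (n1+n2) - real n1) * (real n1 - 1) * (real (n1+n2) - real n1 - 1) / (real (n1+n2) * (real mm)^2)"
    by (rule alg[OF _ nz(2) nz(1) _ hg1 hg2 hg3 hg4]) (use Npos rt in auto)
  finally show ?thesis unfolding r rt .
qed

end

theorem theorem3:
  fixes n1 n2 :: nat
  assumes "n1 \<ge> 1" and "n2 \<ge> 1"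
  defines "n \<equiv> n1 + n2"
  shows "ucov (arrangements n1 n2)
           (\<lambda>xs. real (min (runs True xs) (runs False xs)))
           (\<lambda>xs. real (max (runs True xs) (runs False xs)))
         = real (n1 * n2 * (n1 - 1) * (n2 - 1)) / (real n * (real n - 1)^2)"
  unfolding n_def by (rule main[OF assms(1) assms(2)])

end
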